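(* Let $X$ be a connected, locally compact Polish space with a partial order $\le$ whose strict part is $<$, and suppose there is $M\subseteq X$ such that: (i) $M$ has at least two elements, is connected, and is totally ordered by $<$; (ii) for every $m\in M$ and every neighborhood $U$ of $m$ in $X$ there are $\underline m,\overline m\in M$ with $m\in[\underline m,\overline m]\subseteq U$, where moreover $\overline m$ can be chosen with $m<\overline m$ if $m$ is not the largest element of $M$, and $\underline m$ can be chosen with $\underline m<m$ if $m$ is not the smallest element of $M$; (iii) for every bounded sequence $(x_n)$ in $X$ there are $\underline m,\overline m\in M$ with $\underline m\le x_n\le\overline m$ for all sufficiently large $n$. Let $\succeq$ be a continuous strictly monotone preference on $X$. Then for every $x\in X$ there is a unique $m^*(x)\in M$ with $x\sim m^*(x)$. Moreover, for any continuous strictly increasing $u:X\to\mathbb{R}$, the function $u_\succeq(x)=u(m^*(x))$ is a continuous utility representation of $\succeq$.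
   Context: $[\underline m,\overline m]=\{z\in X:\underline m\le z\le\overline m\}$. A preference is a complete transitive binary relation; continuous if closed in $X\times X$; strictly monotone if $y<x$ implies $x\succ y$; $x\sim y$ means $x\succeq y$ and $y\succeq x$. A function $u$ is strictly increasing if $x<y$ implies $u(x)<u(y)$; it represents $\succeq$ if $x\succeq y\iff u(x)\ge u(y)$. Boundedness in (iii) refers to a metric compatible with the topology of $X$. *)

theory Defs
  imports "HOL-Analysis.Analysis"
begin

definition preference :: "('a \<Rightarrow> 'a \<Rightarrow> bool) \<Rightarrow> bool" where
  "preference R \<longleftrightarrow> (\<forall>x y. R x y \<or> R y x) \<and> (\<forall>x y z. R x y \<longrightarrow> R y z \<longrightarrow> R x z)"

definition continuous_pref :: "('a::topological_space \<Rightarrow> 'a \<Rightarrow> bool) \<Rightarrow> bool" where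
  "continuous_pref R \<longleftrightarrow> closed {(x, y). R x y}"

definition strict_pref :: "('a \<Rightarrow> 'a \<Rightarrow> bool) \<Rightarrow> 'a \<Rightarrow> 'a \<Rightarrow> bool" where
  "strict_pref R x y \<longleftrightarrow> R x y \<and> \<not> R y x"

definition indiff :: "('a \<Rightarrow> 'a \<Rightarrow> bool) \<Rightarrow> 'a \<Rightarrow> 'a \<Rightarrow> bool" where
  "indiff R x y \<longleftrightarrow> R x y \<and> R y x"

definition strictly_monotone_pref :: "('a::order \<Rightarrow> 'a \<Rightarrow> bool) \<Rightarrow> bool" where
  "strictly_monotone_pref R \<longleftrightarrow> (\<forall>x y. y < x \<longrightarrow> strict_pref R x y)"

end

theory Submission
  imports Defs
begin

lemma pref_refl: "preference R \<Longrightarrow> R x x"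
  unfolding preference_def by blast

lemma closed_left: "continuous_pref R \<Longrightarrow> closed {y. R y a}"
proof -
  assume "continuous_pref R"
  then have c: "closed {(x, y). R x y}" by (simp add: continuous_pref_def)
  have "{y. R y a} = (\<lambda>y. (y, a)) -` {(x, y). R x y}" by auto
  moreover have "continuous_on UNIV (\<lambda>y. (y, a))" by (intro continuous_intros)
  then have "closed ((\<lambda>y. (y, a)) -` {(x, y). R x y} \<inter> UNIV)"
    using c continuous_on_closed_vimage[OF closed_UNIV] by blast
  ultimately show ?thesis by simp
qed

lemma closed_right: "continuous_pref R \<Longrightarrow> closed {y. R a y}"
proof -
  assume "continuous_pref R"
  then have c: "closed {(x, y). R x y}" by (simp add: continuous_pref_def)
  have "{y. R a y} = (\<lambda>y. (a, y)) -` {(x, y). R x y}" by auto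
  moreover have "continuous_on UNIV (\<lambda>y. (a, y))" by (intro continuous_intros)
  then have "closed ((\<lambda>y. (a, y)) -` {(x, y). R x y} \<inter> UNIV)"
    using c continuous_on_closed_vimage[OF closed_UNIV] by blast
  ultimately show ?thesis by simp
qed

theorem lemma13:
  fixes M :: "'a::{polish_space, order} set"
    and R :: "'a \<Rightarrow> 'a \<Rightarrow> bool"
  assumes conn: "connected (UNIV :: 'a set)"
    and lc: "locally compact (UNIV :: 'a set)"
    and M_two: "\<exists>a\<in>M. \<exists>b\<in>M. a \<noteq> b"
    and M_conn: "connected M"
    and M_tot: "\<forall>a\<in>M. \<forall>b\<in>M. a \<noteq> b \<longrightarrow> a < b \<or> b < a"
    and M_nbhd: "\<forall>m\<in>M. \<forall>U. open U \<and> m \<in> U \<longrightarrow>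
        (\<exists>lo\<in>M. \<exists>hi\<in>M. m \<in> {lo..hi} \<and> {lo..hi} \<subseteq> U
          \<and> ((\<exists>m'\<in>M. m < m') \<longrightarrow> m < hi)
          \<and> ((\<exists>m'\<in>M. m' < m) \<longrightarrow> lo < m))"
    and M_bdd: "\<forall>x :: nat \<Rightarrow> 'a. bounded (range x) \<longrightarrow>
        (\<exists>lo\<in>M. \<exists>hi\<in>M. eventually (\<lambda>n. lo \<le> x n \<and> x n \<le> hi) sequentially)"
    and pref: "preference R"
    and cont: "continuous_pref R"
    and mono: "strictly_monotone_pref R"
  shows "(\<forall>x. \<exists>!m. m \<in> M \<and> indiff R x m) \<and>
    (\<forall>u :: 'a \<Rightarrow> real. continuous_on UNIV u \<longrightarrow> (\<forall>x y. x < y \<longrightarrow> u x < u y) \<longrightarrow>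
       continuous_on UNIV (\<lambda>x. u (THE m. m \<in> M \<and> indiff R x m)) \<and>
       (\<forall>x y. R x y \<longleftrightarrow> u (THE m. m \<in> M \<and> indiff R x m) \<ge> u (THE m. m \<in> M \<and> indiff R y m)))"
proof -
  have tot: "\<And>x y. R x y \<or> R y x" and tr: "\<And>x y z. R x y \<Longrightarrow> R y z \<Longrightarrow> R x z"
    using pref unfolding preference_def by blast+
  have refl: "\<And>x. R x x" using pref_refl[OF pref] .
  have smono: "\<And>x y. y < x \<Longrightarrow> R x y \<and> \<not> R y x"
    using mono unfolding strictly_monotone_pref_def strict_pref_def by blast
  have cmpM: "R a b \<longleftrightarrow> b \<le> a" if "a \<in> M" "b \<in> M" for a b
  proof (cases "a = b")
    case True then show ?thesis using refl by simp
  next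
    case False
    then have "a < b \<or> b < a" using M_tot that by blast
    then show ?thesis using smono by auto
  qed
  have ex: "\<exists>m. m \<in> M \<and> indiff R x m" for x
  proof -
    have "bounded (range (\<lambda>n::nat. x))" by simp
    then obtain lo hi where "lo \<in> M" "hi \<in> M" "eventually (\<lambda>n::nat. lo \<le> x \<and> x \<le> hi) sequentially"
      using M_bdd by blast
    then have lohi: "lo \<in> M" "hi \<in> M" "lo \<le> x" "x \<le> hi" by auto
    have "R hi x" using lohi refl smono by (cases "hi = x") (auto simp: order.order_iff_strict)
    have "R x lo" using lohi refl smono by (cases "lo = x") (auto simp: order.order_iff_strict)
    have "closed {y. R y x}" "closed {y. R x y}"
      using closed_left[OF cont] closed_right[OF cont] by auto
    moreover have "M \<subseteq> {y. R y x} \<union> {y. R x y}" using tot by auto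
    moreover have "{y. R y x} \<inter> M \<noteq> {}" using \<open>R hi x\<close> lohi by auto
    moreover have "{y. R x y} \<inter> M \<noteq> {}" using \<open>R x lo\<close> lohi by auto
    ultimately have "{y. R y x} \<inter> {y. R x y} \<inter> M \<noteq> {}"
      using M_conn unfolding connected_closed by blast
    then show ?thesis unfolding indiff_def by auto
  qed
  have uniq: "m1 = m2" if "m1 \<in> M" "m2 \<in> M" "indiff R x m1" "indiff R x m2" for x m1 m2
  proof -
    have "R m1 m2" "R m2 m1" using that tr unfolding indiff_def by blast+
    then show ?thesis using cmpM that by auto
  qed
  have part1: "\<forall>x. \<exists>!m. m \<in> M \<and> indiff R x m" using ex uniq by blast
  define ms where "ms x = (THE m. m \<in> M \<and> indiff R x m)" for x
  have msM: "ms x \<in> M" and msI: "indiff R x (ms x)" for x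
    using theI'[of "\<lambda>m. m \<in> M \<and> indiff R x m"] part1 unfolding ms_def by blast+
  have repr: "R x y \<longleftrightarrow> ms y \<le> ms x" for x y
  proof -
    have "R x y \<longleftrightarrow> R (ms x) (ms y)" using msI[of x] msI[of y] tr unfolding indiff_def by blast
    then show ?thesis using cmpM msM by blast
  qed
  have strictM: "R a y \<and> \<not> R y a \<longleftrightarrow> ms y < a" if "a \<in> M" for a y
  proof -
    have "R a y \<longleftrightarrow> R a (ms y)" "R y a \<longleftrightarrow> R (ms y) a"
      using msI[of y] tr unfolding indiff_def by blast+
    then show ?thesis using cmpM[OF that msM] cmpM[OF msM that] by auto
  qed
  have strictM2: "R y a \<and> \<not> R a y \<longleftrightarrow> a < ms y" if "a \<in> M" for a y
  proof -
    have "R a y \<longleftrightarrow> R a (ms y)" "R y a \<longleftrightarrow> R (ms y) a"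
      using msI[of y] tr unfolding indiff_def by blast+
    then show ?thesis using cmpM[OF that msM] cmpM[OF msM that] by auto
  qed
  have openS: "open {y. R a y \<and> \<not> R y a}" for a
  proof -
    have "{y. R a y \<and> \<not> R y a} = - {y. R y a}" using tot by auto
    then show ?thesis using closed_left[OF cont, of a] by (simp add: open_Compl)
  qed
  have openS2: "open {y. R y a \<and> \<not> R a y}" for a
  proof -
    have "{y. R y a \<and> \<not> R a y} = - {y. R a y}" using tot by auto
    then show ?thesis using closed_right[OF cont, of a] by (simp add: open_Compl)
  qed
  have mscont: "continuous_on UNIV ms"
    unfolding continuous_on_open_vimage[OF open_UNIV]
  proof (intro allI impI)
    fix U :: "'a set" assume U: "open U"
    show "open (ms -` U \<inter> UNIV)"
    proof (subst open_subopen, intro ballI)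
      fix x assume "x \<in> ms -` U \<inter> UNIV"
      then have mU: "ms x \<in> U" by simp
      have "\<exists>lo\<in>M. \<exists>hi\<in>M. ms x \<in> {lo..hi} \<and> {lo..hi} \<subseteq> U
          \<and> ((\<exists>m'\<in>M. ms x < m') \<longrightarrow> ms x < hi)
          \<and> ((\<exists>m'\<in>M. m' < ms x) \<longrightarrow> lo < ms x)"
        using M_nbhd[rule_format, OF msM[of x], of U] U mU by blast
      then obtain lo hi where lh: "lo \<in> M" "hi \<in> M" "ms x \<in> {lo..hi}" "{lo..hi} \<subseteq> U"
        "(\<exists>m'\<in>M. ms x < m') \<longrightarrow> ms x < hi" "(\<exists>m'\<in>M. m' < ms x) \<longrightarrow> lo < ms x"
        by blast
      define V where "V = {y. (\<not>(\<exists>m'\<in>M. ms x < m') \<or> R hi y \<and> \<not> R y hi)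
                        \<and> (\<not>(\<exists>m'\<in>M. m' < ms x) \<or> R y lo \<and> \<not> R lo y)}"
      have o1: "open {y. \<not>(\<exists>m'\<in>M. ms x < m') \<or> R hi y \<and> \<not> R y hi}"
        using openS[of hi] by (cases "\<exists>m'\<in>M. ms x < m'") auto
      have o2: "open {y. \<not>(\<exists>m'\<in>M. m' < ms x) \<or> R y lo \<and> \<not> R lo y}"
        using openS2[of lo] by (cases "\<exists>m'\<in>M. m' < ms x") auto
      have "V = {y. \<not>(\<exists>m'\<in>M. ms x < m') \<or> R hi y \<and> \<not> R y hi} \<inter> {y. \<not>(\<exists>m'\<in>M. m' < ms x) \<or> R y lo \<and> \<not> R lo y}"
        unfolding V_def by blast
      then have "open V" using open_Int[OF o1 o2] by simp
      moreover have "x \<in> V"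
        unfolding V_def using lh strictM[OF lh(2), of x] strictM2[OF lh(1), of x] by auto
      moreover have "V \<subseteq> ms -` U \<inter> UNIV"
      proof
        fix y assume yV: "y \<in> V"
        have "ms y \<le> hi"
        proof (cases "\<exists>m'\<in>M. ms x < m'")
          case True then show ?thesis using yV strictM[OF lh(2), of y] unfolding V_def by auto
        next
          case False
          then have "ms y \<le> ms x" using M_tot msM[of x] msM[of y] by (metis order.order_iff_strict)
          then show ?thesis using lh(3) by auto
        qed
        moreover have "lo \<le> ms y"
        proof (cases "\<exists>m'\<in>M. m' < ms x")
          case True then show ?thesis using yV strictM2[OF lh(1), of y] unfolding V_def by auto
        next
          case False
          then have "ms x \<le> ms y" using M_tot msM[of x] msM[of y] by (metis order.order_iff_strict)
          then show ?thesis using lh(3) by auto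
        qed
        ultimately show "y \<in> ms -` U \<inter> UNIV" using lh(4) by auto
      qed
      ultimately show "\<exists>T. open T \<and> x \<in> T \<and> T \<subseteq> ms -` U \<inter> UNIV" by blast
    qed
  qed
  have part2: "continuous_on UNIV (\<lambda>x. u (ms x)) \<and> (\<forall>x y. R x y \<longleftrightarrow> u (ms x) \<ge> u (ms y))"
    if uc: "continuous_on UNIV u" and ui: "\<forall>x y. x < y \<longrightarrow> u x < u y" for u :: "'a \<Rightarrow> real"
  proof
    show "continuous_on UNIV (\<lambda>x. u (ms x))"
      using continuous_on_compose[OF mscont continuous_on_subset[OF uc]] by (simp add: o_def)
    show "\<forall>x y. R x y \<longleftrightarrow> u (ms x) \<ge> u (ms y)"
    proof (intro allI)
      fix x y
      show "R x y \<longleftrightarrow> u (ms x) \<ge> u (ms y)"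
      proof (cases "ms x = ms y")
        case True then show ?thesis using repr by simp
      next
        case False
        then have "ms x < ms y \<or> ms y < ms x" using M_tot msM by blast
        then show ?thesis using repr ui by force
      qed
    qed
  qed
  show ?thesis using part1 part2 unfolding ms_def by blast
qed

end
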